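(* Let $k$ be an algebraically closed field of characteristic $0$. For every $\mu\in k$, every integer $m\ge2$, every $s\ge0$, integers $m_1,\dots,m_s\ge1$ and $\lambda_1,\dots,\lambda_s\in k^\times$, there exists a $k$-valued pseudocharacter $\alpha$ of $\mathrm{Cob}_2$ with $$Z_\alpha(T)=\mu+mT+\sum_{i=1}^s\frac{m_i\lambda_i^{-1}}{1-\lambda_iT}.$$
   Context: $\mathrm{Cob}_2$ is the rigid symmetric monoidal category of oriented two-dimensional cobordisms between closed oriented one-manifolds, with unit the empty manifold $\emptyset$. An evaluation is a monoid homomorphism $\alpha:\mathrm{End}_{\mathrm{Cob}_2}(\emptyset)\to k$ ($\alpha(\emptyset)=1$, multiplicative on disjoint unions); it is determined by $\alpha_g:=\alpha(S_g)$, $S_g$ the closed connected oriented genus-$g$ surface, and $Z_\alpha(T)=\sum_{g\ge0}\alpha_gT^g$ (rational functions identified with their expansions at $T=0$). Extend $\alpha$ linearly. For an object $N$ and $n\ge1$, $e^-_{N,n}=\sum_{\sigma\in S_n}\mathrm{sgn}(\sigma)\sigma\in k\,\mathrm{End}(N^{\sqcup n})$ via permutation cobordisms; $\mathrm{cl}(f)$ denotes the closure (categorical trace) of an endomorphism $f$. $\deg_\alpha(N)$ is the least $d\ge0$ with $\alpha(\mathrm{cl}(h\circ e^-_{N,d+1}))=0$ for all $h\in\mathrm{End}_{\mathrm{Cob}_2}(N^{\sqcup(d+1)})$ ($\infty$ if none); $\alpha$ is a pseudocharacter of $\mathrm{Cob}_2$ if $\deg_\alpha(N)<\infty$ for every object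 $N$. *)

theory Defs
  imports "HOL-Computational_Algebra.Computational_Algebra" "HOL-Combinatorics.Permutations" "HOL-Library.Extended_Nat"
begin

text \<open>An object is a disjoint union of n circles (n :: nat).
An endomorphism of the object with K circles is represented by data (c, cmp, gen):
the surface has components indexed by 0..<c, component j has genus gen j; the boundary
circle (False, i) (i-th incoming circle, i < K) lies on component cmp (False, i), and
the boundary circle (True, i) (i-th outgoing circle) lies on component cmp (True, i).
Components not touched by the boundary are closed components.  By the classification
of surfaces every oriented cobordism is (up to diffeomorphism rel boundary) of this form.\<close>

definition endo_wf :: "nat \<Rightarrow> nat \<Rightarrow> (bool \<times> nat \<Rightarrow> nat) \<Rightarrow> bool" where
  "endo_wf K c cmp \<longleftrightarrow> (\<forall>b i. i < K \<longrightarrow> cmp (b, i) < c)"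

text \<open>Permutation of the K = n*(d+1) circles of N^(d+1) induced by a permutation sigma
of the d+1 blocks (each block a copy of N with n circles).\<close>
definition block_perm :: "nat \<Rightarrow> (nat \<Rightarrow> nat) \<Rightarrow> nat \<Rightarrow> nat" where
  "block_perm n \<sigma> i = \<sigma> (i div n) * n + i mod n"

text \<open>Closing up h o sigma: the outgoing circle i of h is glued to the incoming circle
block_perm n sigma i of h.  The gluing graph on the components 0..<c of h:\<close>
definition glue_edges :: "nat \<Rightarrow> nat \<Rightarrow> (nat \<Rightarrow> nat) \<Rightarrow> (bool \<times> nat \<Rightarrow> nat) \<Rightarrow> (nat \<times> nat) set" where
  "glue_edges n K \<sigma> cmp = {(cmp (True, i), cmp (False, block_perm n \<sigma> i)) | i. i < K}"

definition closed_comps :: "nat \<Rightarrow> nat \<Rightarrow> (nat \<Rightarrow> nat) \<Rightarrow> nat \<Rightarrow> (bool \<times> nat \<Rightarrow> nat) \<Rightarrow> nat set set" where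
  "closed_comps n K \<sigma> c cmp =
     {0..<c} // ((glue_edges n K \<sigma> cmp \<union> (glue_edges n K \<sigma> cmp)\<inverse>)\<^sup>*)"

text \<open>Genus of a closed component C: sum of genera of the pieces plus the first Betti
number of the gluing graph restricted to C (Euler characteristic count).\<close>
definition comp_genus :: "nat \<Rightarrow> (bool \<times> nat \<Rightarrow> nat) \<Rightarrow> (nat \<Rightarrow> nat) \<Rightarrow> nat set \<Rightarrow> nat" where
  "comp_genus K cmp gen C =
     (\<Sum>v\<in>C. gen v) + card {i. i < K \<and> cmp (True, i) \<in> C} + 1 - card C"

text \<open>An evaluation alpha is determined by the sequence a g = alpha(S_g); on a closed
surface it is the product over connected components.  This is
alpha(cl(h o sigma)) for h = (c, cmp, gen) an endomorphism of N^(d+1), |N| = n circles.\<close>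
definition eval_closure :: "(nat \<Rightarrow> 'k::comm_ring_1) \<Rightarrow> nat \<Rightarrow> nat \<Rightarrow> (nat \<Rightarrow> nat)
    \<Rightarrow> nat \<Rightarrow> (bool \<times> nat \<Rightarrow> nat) \<Rightarrow> (nat \<Rightarrow> nat) \<Rightarrow> 'k" where
  "eval_closure a n K \<sigma> c cmp gen =
     (\<Prod>C\<in>closed_comps n K \<sigma> c cmp. a (comp_genus K cmp gen C))"

text \<open>alpha(cl(h o e^-_{N,d+1})) = 0 for all h in End(N^(d+1)), N = n circles.\<close>
definition antisym_vanishes :: "(nat \<Rightarrow> 'k::comm_ring_1) \<Rightarrow> nat \<Rightarrow> nat \<Rightarrow> bool" where
  "antisym_vanishes a n d \<longleftrightarrow>
     (\<forall>c cmp gen. endo_wf (n * Suc d) c cmp \<longrightarrow>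
        (\<Sum>\<sigma>\<in>{\<sigma>. \<sigma> permutes {..<Suc d}}.
            of_int (sign \<sigma>) * eval_closure a n (n * Suc d) \<sigma> c cmp gen) = 0)"

definition deg_alpha :: "(nat \<Rightarrow> 'k::comm_ring_1) \<Rightarrow> nat \<Rightarrow> enat" where
  "deg_alpha a n = (if \<exists>d. antisym_vanishes a n d
                    then enat (LEAST d. antisym_vanishes a n d) else \<infinity>)"

definition pseudocharacter :: "(nat \<Rightarrow> 'k::comm_ring_1) \<Rightarrow> bool" where
  "pseudocharacter a \<longleftrightarrow> (\<forall>n. deg_alpha a n < \<infinity>)"

definition Z_alpha :: "(nat \<Rightarrow> 'k::comm_ring_1) \<Rightarrow> 'k fps" where
  "Z_alpha a = Abs_fps a"

end

theory Submission
  imports Defs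
begin

lemma comp_edges_bound:
  fixes src tgt :: "nat \<Rightarrow> nat"
  assumes G: "G = {(src i, tgt i) | i. i < K}"
    and st: "\<forall>i<K. src i < c \<and> tgt i < c" and rc: "r < c"
  shows "card ((G \<union> G\<inverse>)\<^sup>* `` {r}) \<le> card {i. i<K \<and> src i \<in> (G \<union> G\<inverse>)\<^sup>* `` {r}} + 1"
proof -
  define Rl where "Rl = G \<union> G\<inverse>"
  define C where "C = Rl\<^sup>* `` {r}"
  have symRl: "sym Rl" unfolding Rl_def by (auto simp: sym_def)
  have symS: "sym (Rl\<^sup>*)" using symRl by (rule sym_rtrancl)
  have Rlc: "(x, y) \<in> Rl \<Longrightarrow> y < c" for x y using st unfolding Rl_def G by auto
  have stepC: "(v, w) \<in> Rl \<Longrightarrow> v \<in> C \<Longrightarrow> w \<in> C" for v w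
    unfolding C_def by (auto intro: rtrancl_into_rtrancl)
  have Csub: "C \<subseteq> {..<c}"
  proof
    fix y assume "y \<in> C"
    then have "(r, y) \<in> Rl\<^sup>*" unfolding C_def by auto
    then show "y \<in> {..<c}" 
    proof (induction rule: rtrancl_induct)
      case base then show ?case using rc by simp
    next
      case (step y z) then show ?case using Rlc by blast
    qed
  qed
  have finC: "finite C" using Csub finite_subset by blast
  have rC: "r \<in> C" unfolding C_def by auto
  define dist where "dist v = (LEAST k. (v, r) \<in> Rl ^^ k)" for v
  have ex: "\<exists>k. (v, r) \<in> Rl ^^ k" if "v \<in> C" for v
  proof -
    have "(r, v) \<in> Rl\<^sup>*" using that unfolding C_def by auto
    then have "(v, r) \<in> Rl\<^sup>*" using symS by (auto simp: sym_def)
    then show ?thesis by (simp add: rtrancl_power)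
  qed
  have dpath: "(v, r) \<in> Rl ^^ dist v" if "v \<in> C" for v
    using ex[OF that] unfolding dist_def by (rule LeastI_ex)
  have exi: "\<exists>i. i < K \<and> ((src i = v \<and> dist (tgt i) + 1 = dist v) \<or> (tgt i = v \<and> dist (src i) + 1 = dist v))"
    if "v \<in> C" "v \<noteq> r" for v
  proof -
    have p: "(v, r) \<in> Rl ^^ dist v" by (rule dpath[OF that(1)])
    have "dist v \<noteq> 0" using p that(2) by (cases "dist v") auto
    then obtain k where k: "dist v = Suc k" by (cases "dist v") auto
    then obtain w where w1: "(v, w) \<in> Rl" and w2: "(w, r) \<in> Rl ^^ k"
      using p relpow_Suc_D2 by metis
    have wC: "w \<in> C" using stepC[OF w1 that(1)] .
    have "dist w \<le> k" unfolding dist_def using w2 by (rule Least_le)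
    moreover have "(v, r) \<in> Rl ^^ Suc (dist w)" using relpow_Suc_I2[OF w1 dpath[OF wC]] .
    then have "dist v \<le> Suc (dist w)" unfolding dist_def by (rule Least_le)
    ultimately have dw: "dist w + 1 = dist v" using k by simp
    from w1 obtain i where "i < K" "(src i = v \<and> tgt i = w) \<or> (tgt i = v \<and> src i = w)"
      unfolding Rl_def G by auto
    then show ?thesis using dw by blast
  qed
  define ch where "ch v = (SOME i. i < K \<and> ((src i = v \<and> dist (tgt i) + 1 = dist v) \<or> (tgt i = v \<and> dist (src i) + 1 = dist v)))" for v
  have chp: "ch v < K \<and> ((src (ch v) = v \<and> dist (tgt (ch v)) + 1 = dist v) \<or> (tgt (ch v) = v \<and> dist (src (ch v)) + 1 = dist v))"
    if "v \<in> C" "v \<noteq> r" for v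
    unfolding ch_def using someI_ex[OF exi[OF that]] .
  have inj: "inj_on ch (C - {r})"
  proof (rule inj_onI)
    fix v v' assume a: "v \<in> C - {r}" "v' \<in> C - {r}" "ch v = ch v'"
    have c1: "ch v < K \<and> ((src (ch v) = v \<and> dist (tgt (ch v)) + 1 = dist v) \<or> (tgt (ch v) = v \<and> dist (src (ch v)) + 1 = dist v))"
      using chp a(1) by blast
    have c2: "ch v < K \<and> ((src (ch v) = v' \<and> dist (tgt (ch v)) + 1 = dist v') \<or> (tgt (ch v) = v' \<and> dist (src (ch v)) + 1 = dist v'))"
      using chp[of v'] a(2) a(3) by simp
    show "v = v'"
    proof (rule ccontr)
      assume ne: "v \<noteq> v'"
      define i where "i = ch v"
      have d1: "(src i = v \<and> dist (tgt i) + 1 = dist v) \<or> (tgt i = v \<and> dist (src i) + 1 = dist v)"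
        using c1 unfolding i_def by blast
      have d2: "(src i = v' \<and> dist (tgt i) + 1 = dist v') \<or> (tgt i = v' \<and> dist (src i) + 1 = dist v')"
        using c2 unfolding i_def by blast
      show False
      proof (cases "src i = v")
        case True
        then have "tgt i = v'" "dist (src i) + 1 = dist v'" using d2 ne by auto
        moreover have "dist (tgt i) + 1 = dist v" using d1 True \<open>tgt i = v'\<close> ne by auto
        ultimately show False using True by simp
      next
        case False
        then have "tgt i = v" "dist (src i) + 1 = dist v" using d1 by auto
        moreover have "src i = v'" "dist (tgt i) + 1 = dist v'" using d2 ne \<open>tgt i = v\<close> by auto
        ultimately show False by simp
      qed
    qed
  qed
  have img: "ch ` (C - {r}) \<subseteq> {i. i<K \<and> src i \<in> C}"
  proof
    fix x assume "x \<in> ch ` (C - {r})"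
    then obtain v where v: "v \<in> C" "v \<noteq> r" "x = ch v" by auto
    have "x < K" using chp[OF v(1,2)] v(3) by auto
    moreover have "src x \<in> C"
    proof (cases "src x = v")
      case True then show ?thesis using v by simp
    next
      case False
      then have "tgt x = v" using chp[OF v(1,2)] v(3) by auto
      then have "(v, src x) \<in> Rl" using \<open>x < K\<close> unfolding Rl_def G by auto
      then show ?thesis using stepC v by blast
    qed
    ultimately show "x \<in> {i. i<K \<and> src i \<in> C}" by simp
  qed
  have "card (C - {r}) \<le> card {i. i<K \<and> src i \<in> C}"
    by (rule card_inj_on_le[OF inj img]) simp
  moreover have "card C = card (C - {r}) + 1"
    using card_Suc_Diff1[OF finC rC] by simp
  ultimately have "card C \<le> card {i. i<K \<and> src i \<in> C} + 1" by linarith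
  then show ?thesis by (simp only: C_def Rl_def)
qed
lemma power_int_sum':
  fixes x :: "'k::field"
  assumes "x \<noteq> 0"
  shows "x powi (\<Sum>v\<in>A. f v) = (\<Prod>v\<in>A. x powi f v)"
proof (cases "finite A")
  case True then show ?thesis
    by (induction rule: finite_induct) (simp_all add: power_int_add assms)
qed simp

lemma ER_equiv: "equiv UNIV ((X \<union> X\<inverse>)\<^sup>*)"
proof -
  have "sym (X \<union> X\<inverse>)" by (auto simp: sym_def)
  then have "sym ((X \<union> X\<inverse>)\<^sup>*)" by (rule sym_rtrancl)
  then show ?thesis unfolding equiv_def refl_on_def by (auto intro: trans_rtrancl)
qed

lemma ER_closed:
  assumes G: "G = {(src i, tgt i) | i. i < K}"
    and st: "\<forall>i<K. src i < c \<and> tgt i < c"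
    and "(x, y) \<in> (G \<union> G\<inverse>)\<^sup>*" "x < c"
  shows "y < c"
  using assms(3,4)
proof (induction rule: rtrancl_induct)
  case (step y z) then show ?case using st unfolding G by auto
qed simp

lemma ER_const:
  assumes G: "G = {(src i, tgt i) | i. i < K}"
    and kc: "\<forall>i<K. \<kappa> (src i) = \<kappa> (tgt i)"
    and "(x, y) \<in> (G \<union> G\<inverse>)\<^sup>*"
  shows "\<kappa> y = \<kappa> x"
  using assms(3)
proof (induction rule: rtrancl_induct)
  case (step y z) then show ?case using kc unfolding G by auto
qed simp


lemma state_sum:
  fixes \<gamma> :: "nat \<Rightarrow> 'k::field" and src tgt gen :: "nat \<Rightarrow> nat"
  assumes G: "G = {(src i, tgt i) | i. i < K}"
    and st: "\<forall>i<K. src i < c \<and> tgt i < c"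
    and gnz: "\<forall>j<R. \<gamma> j \<noteq> 0"
  shows "(\<Prod>C\<in>{0..<c}//((G \<union> G\<inverse>)\<^sup>*).
            (\<Sum>j<R. \<gamma> j powi (int ((\<Sum>v\<in>C. gen v) + card {i. i<K \<and> src i \<in> C} + 1 - card C) - 1)))
       = (\<Sum>\<kappa>\<in>{\<kappa>\<in>{0..<c} \<rightarrow>\<^sub>E {..<R}. \<forall>i<K. \<kappa> (src i) = \<kappa> (tgt i)}.
            (\<Prod>v\<in>{0..<c}. \<gamma> (\<kappa> v) powi (int (gen v) - 1)) * (\<Prod>i<K. \<gamma> (\<kappa> (src i))))"
  (is "?L = ?R")
proof -
  define ER where "ER = (G \<union> G\<inverse>)\<^sup>*"
  define comps where "comps = {0..<c}//ER"
  define Ec where "Ec C = card {i. i<K \<and> src i \<in> C}" for C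
  define f where "f C j = \<gamma> j powi (int ((\<Sum>v\<in>C. gen v) + Ec C + 1 - card C) - 1)" for C j
  define W where "W \<kappa> = (\<Prod>v\<in>{0..<c}. \<gamma> (\<kappa> v) powi (int (gen v) - 1)) * (\<Prod>i<K. \<gamma> (\<kappa> (src i)))" for \<kappa>
  define T where "T = {\<kappa>\<in>{0..<c} \<rightarrow>\<^sub>E {..<R}. \<forall>i<K. \<kappa> (src i) = \<kappa> (tgt i)}"
  have eqv: "equiv UNIV ER" unfolding ER_def by (rule ER_equiv)
  have ERrefl: "(v, v) \<in> ER" for v unfolding ER_def by simp
  have comps_eq: "comps = (\<lambda>v. ER``{v}) ` {0..<c}" unfolding comps_def quotient_def by auto
  have compsE: "\<exists>w. w < c \<and> C = ER``{w}" if "C \<in> comps" for C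
    using that unfolding comps_eq by auto
  have finc: "finite comps" unfolding comps_eq by simp
  have clsub: "ER``{v} \<subseteq> {0..<c}" if "v < c" for v
    using ER_closed[OF G st _ that] unfolding ER_def by auto
  have Csub: "C \<subseteq> {0..<c}" if "C \<in> comps" for C
  proof -
    have "C \<in> (\<lambda>v. ER``{v}) ` {0..<c}" using that comps_eq by simp
    then obtain w where "w < c" "C = ER``{w}" by auto
    then show ?thesis using clsub by simp
  qed
  have finC: "finite C" if "C \<in> comps" for C using Csub[OF that] finite_subset by blast
  have cls: "ER``{v} = C" if CC: "C \<in> comps" "v \<in> C" for C v
  proof -
    obtain w where w: "w < c" "C = ER``{w}" using compsE[OF CC(1)] by auto
    then have "(w, v) \<in> ER" using that(2) by auto
    then show ?thesis using w eqv by (metis UNIV_I equiv_class_eq_iff)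
  qed
  have bnd: "card C \<le> Ec C + 1" if CC: "C \<in> comps" for C
  proof -
    obtain w where w: "w < c" "C = ER``{w}" using compsE[OF CC] by auto
    show ?thesis unfolding Ec_def w(2) ER_def using comp_edges_bound[OF G st w(1)] .
  qed
  have fsplit: "f C j = (\<Prod>v\<in>C. \<gamma> j powi (int (gen v) - 1)) * \<gamma> j ^ Ec C"
    if C: "C \<in> comps" and j: "j < R" for C j
  proof -
    have nz: "\<gamma> j \<noteq> 0" using gnz j by simp
    have cardC: "int (card C) = (\<Sum>v\<in>C. 1)" by simp
    have "int ((\<Sum>v\<in>C. gen v) + Ec C + 1 - card C) - 1 = (\<Sum>v\<in>C. int (gen v)) + int (Ec C) - int (card C)"
      using bnd[OF C] by (simp add: of_nat_diff)
    also have "\<dots> = (\<Sum>v\<in>C. (int (gen v) - 1)) + int (Ec C)"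
      by (simp add: sum_subtractf)
    finally have e: "int ((\<Sum>v\<in>C. gen v) + Ec C + 1 - card C) - 1 = (\<Sum>v\<in>C. (int (gen v) - 1)) + int (Ec C)" .
    show ?thesis unfolding f_def e using nz by (simp add: power_int_add power_int_sum')
  qed
  have "?L = (\<Prod>C\<in>comps. \<Sum>j<R. f C j)" unfolding comps_def ER_def f_def Ec_def by simp
  also have "\<dots> = (\<Sum>\<phi>\<in>comps \<rightarrow>\<^sub>E {..<R}. \<Prod>C\<in>comps. f C (\<phi> C))"
    by (rule prod_sum_PiE) (use finc in auto)
  also have "\<dots> = (\<Sum>\<kappa>\<in>T. W \<kappa>)"
  proof (rule sum.reindex_bij_witness[where j = "\<lambda>\<phi>. (\<lambda>v\<in>{0..<c}. \<phi> (ER``{v}))"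
                                       and i = "\<lambda>\<kappa>. (\<lambda>C\<in>comps. \<kappa> (SOME v. v \<in> C))"])
    fix \<phi> assume phi: "\<phi> \<in> comps \<rightarrow>\<^sub>E {..<R}"
    show "(\<lambda>C\<in>comps. (\<lambda>v\<in>{0..<c}. \<phi> (ER``{v})) (SOME v. v \<in> C)) = \<phi>"
    proof (rule ext)
      fix C show "(\<lambda>C\<in>comps. (\<lambda>v\<in>{0..<c}. \<phi> (ER``{v})) (SOME v. v \<in> C)) C = \<phi> C"
      proof (cases "C \<in> comps")
        case True
        obtain w where w: "w < c" "C = ER``{w}" using True unfolding comps_eq by auto
        have "w \<in> C" using w ERrefl by simp
        then have sv: "(SOME v. v \<in> C) \<in> C" by (rule someI)
        then show ?thesis using True Csub[OF True] cls[OF True sv] by auto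
      next
        case False then show ?thesis using phi by auto
      qed
    qed
    show "(\<lambda>v\<in>{0..<c}. \<phi> (ER``{v})) \<in> T"
    proof -
      have "(\<lambda>v\<in>{0..<c}. \<phi> (ER``{v})) \<in> {0..<c} \<rightarrow>\<^sub>E {..<R}"
        using phi unfolding comps_eq by auto
      moreover have "ER``{src i} = ER``{tgt i}" if "i < K" for i
      proof -
        have "(src i, tgt i) \<in> ER" unfolding ER_def G using that by auto
        then show ?thesis using eqv by (metis equiv_class_eq_iff)
      qed
      ultimately show ?thesis unfolding T_def using st by auto
    qed
    show "W (\<lambda>v\<in>{0..<c}. \<phi> (ER``{v})) = (\<Prod>C\<in>comps. f C (\<phi> C))"
    proof -
      define \<kappa> where "\<kappa> = (\<lambda>v\<in>{0..<c}. \<phi> (ER``{v}))"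
      have kC: "\<kappa> v = \<phi> C" if CC: "C \<in> comps" "v \<in> C" for C v
      proof -
        have "v < c" using Csub[OF CC(1)] CC(2) by auto
        then show ?thesis using cls[OF CC] unfolding \<kappa>_def by simp
      qed
      have pR: "\<phi> C < R" if "C \<in> comps" for C using phi that by auto
      have dj: "\<forall>A\<in>comps. \<forall>B\<in>comps. A \<noteq> B \<longrightarrow> A \<inter> B = {}"
        using cls by blast
      have U1: "\<Union>comps = {0..<c}" using Csub eqv unfolding comps_eq
        by (auto intro: ERrefl)
      have p1: "(\<Prod>v\<in>{0..<c}. \<gamma> (\<kappa> v) powi (int (gen v) - 1))
          = (\<Prod>C\<in>comps. \<Prod>v\<in>C. \<gamma> (\<phi> C) powi (int (gen v) - 1))"
      proof -
        have "(\<Prod>v\<in>{0..<c}. \<gamma> (\<kappa> v) powi (int (gen v) - 1))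
            = (\<Prod>C\<in>comps. \<Prod>v\<in>C. \<gamma> (\<kappa> v) powi (int (gen v) - 1))"
          using prod.Union_disjoint[of comps "\<lambda>v. \<gamma> (\<kappa> v) powi (int (gen v) - 1)"] finC dj U1
          by simp
        also have "\<dots> = (\<Prod>C\<in>comps. \<Prod>v\<in>C. \<gamma> (\<phi> C) powi (int (gen v) - 1))"
          using kC by (intro prod.cong refl) auto
        finally show ?thesis .
      qed
      define A where "A C = {i. i<K \<and> src i \<in> C}" for C
      have UA: "(\<Union>C\<in>comps. A C) = {..<K}"
      proof
        show "(\<Union>C\<in>comps. A C) \<subseteq> {..<K}" unfolding A_def by auto
        show "{..<K} \<subseteq> (\<Union>C\<in>comps. A C)"
        proof
          fix i assume "i \<in> {..<K}"
          then have "i < K" "src i < c" using st by auto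
          then have "ER``{src i} \<in> comps" "src i \<in> ER``{src i}" using eqv unfolding comps_eq
            by (auto intro: ERrefl)
          then show "i \<in> (\<Union>C\<in>comps. A C)" unfolding A_def using \<open>i < K\<close> by blast
        qed
      qed
      have p2: "(\<Prod>i<K. \<gamma> (\<kappa> (src i))) = (\<Prod>C\<in>comps. \<gamma> (\<phi> C) ^ Ec C)"
      proof -
        have "(\<Prod>i<K. \<gamma> (\<kappa> (src i))) = (\<Prod>C\<in>comps. \<Prod>i\<in>A C. \<gamma> (\<kappa> (src i)))"
          unfolding UA[symmetric]
          by (rule prod.UNION_disjoint) (use finC finc dj in \<open>auto simp: A_def\<close>)
        also have "\<dots> = (\<Prod>C\<in>comps. \<Prod>i\<in>A C. \<gamma> (\<phi> C))"
          using kC unfolding A_def by (intro prod.cong refl) auto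
        also have "\<dots> = (\<Prod>C\<in>comps. \<gamma> (\<phi> C) ^ Ec C)"
          unfolding A_def Ec_def by simp
        finally show ?thesis .
      qed
      have "W \<kappa> = (\<Prod>C\<in>comps. (\<Prod>v\<in>C. \<gamma> (\<phi> C) powi (int (gen v) - 1)) * \<gamma> (\<phi> C) ^ Ec C)"
        unfolding W_def p1 p2 by (simp add: prod.distrib)
      also have "\<dots> = (\<Prod>C\<in>comps. f C (\<phi> C))"
        using fsplit pR by (intro prod.cong refl) auto
      finally show ?thesis unfolding \<kappa>_def .
    qed
  next
    fix \<kappa> assume kT: "\<kappa> \<in> T"
    have kconst: "\<kappa> y = \<kappa> x" if "(x, y) \<in> ER" for x y
      using ER_const[OF G _ that[unfolded ER_def]] kT unfolding T_def by blast
    show "(\<lambda>C\<in>comps. \<kappa> (SOME v. v \<in> C)) \<in> comps \<rightarrow>\<^sub>E {..<R}"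
    proof -
      have "\<kappa> (SOME v. v \<in> C) < R" if CC: "C \<in> comps" for C
      proof -
        obtain w where w: "w < c" "C = ER``{w}" using compsE[OF CC] by auto
        have "w \<in> C" using w ERrefl by simp
        then have sv: "(SOME v. v \<in> C) \<in> C" by (rule someI)
        then show ?thesis using kT Csub[OF CC] unfolding T_def by auto
      qed
      then show ?thesis by auto
    qed
    show "(\<lambda>v\<in>{0..<c}. (\<lambda>C\<in>comps. \<kappa> (SOME v. v \<in> C)) (ER``{v})) = \<kappa>"
    proof (rule ext)
      fix v show "(\<lambda>v\<in>{0..<c}. (\<lambda>C\<in>comps. \<kappa> (SOME v. v \<in> C)) (ER``{v})) v = \<kappa> v"
      proof (cases "v < c")
        case True
        have inC: "ER``{v} \<in> comps" using True unfolding comps_eq by auto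
        have "v \<in> ER``{v}" using ERrefl by simp
        then have sv: "(SOME w. w \<in> ER``{v}) \<in> ER``{v}" by (rule someI)
        then have "\<kappa> (SOME w. w \<in> ER``{v}) = \<kappa> v" using kconst by auto
        then show ?thesis using True inC by auto
      next
        case False then show ?thesis using kT unfolding T_def by auto
      qed
    qed
  qed
  finally show ?thesis unfolding T_def W_def .
qed

lemma sign_sum_zero:
  fixes P :: "(nat \<Rightarrow> nat) \<Rightarrow> bool"
  assumes bb: "b < Suc d" "b' < Suc d" "b \<noteq> b'"
    and PP: "\<And>\<sigma>. \<sigma> permutes {..<Suc d} \<Longrightarrow> P \<sigma> \<Longrightarrow> P (\<sigma> \<circ> Transposition.transpose b b')"
  shows "(\<Sum>\<sigma>\<in>{\<sigma>. \<sigma> permutes {..<Suc d}}. if P \<sigma> then sign \<sigma> else 0) = (0::int)"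
proof -
  define \<tau> where "\<tau> = Transposition.transpose b b'"
  define S where "S = {\<sigma>. \<sigma> permutes {..<Suc d}}"
  define f where "f \<sigma> = (if P \<sigma> then sign \<sigma> else (0::int))" for \<sigma>
  have tp: "\<tau> permutes {..<Suc d}" unfolding \<tau>_def using bb by (intro permutes_swap_id) auto
  have tt: "\<sigma> \<circ> \<tau> \<circ> \<tau> = \<sigma>" for \<sigma> unfolding \<tau>_def by (simp add: comp_assoc)
  have inS: "\<sigma> \<circ> \<tau> \<in> S" if "\<sigma> \<in> S" for \<sigma>
    using that tp unfolding S_def by (auto intro: permutes_compose)
  have Piff: "P (\<sigma> \<circ> \<tau>) \<longleftrightarrow> P \<sigma>" if "\<sigma> \<in> S" for \<sigma>
  proof
    assume "P (\<sigma> \<circ> \<tau>)"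
    then have "P (\<sigma> \<circ> \<tau> \<circ> \<tau>)" using PP inS[OF that] unfolding S_def \<tau>_def by auto
    then show "P \<sigma>" by (simp only: tt)
  next
    assume "P \<sigma>" then show "P (\<sigma> \<circ> \<tau>)" using PP that unfolding S_def \<tau>_def by auto
  qed
  have sg: "sign (\<sigma> \<circ> \<tau>) = - sign \<sigma>" if "\<sigma> \<in> S" for \<sigma>
  proof -
    have "permutation \<sigma>" using that unfolding S_def by (auto intro: permutes_imp_permutation)
    moreover have "permutation \<tau>" using tp by (auto intro: permutes_imp_permutation)
    ultimately show ?thesis using bb by (simp add: sign_compose \<tau>_def sign_swap_id)
  qed
  have "sum f S = sum (\<lambda>\<sigma>. f (\<sigma> \<circ> \<tau>)) S"
    by (rule sum.reindex_bij_witness[where i = "\<lambda>\<sigma>. \<sigma> \<circ> \<tau>" and j = "\<lambda>\<sigma>. \<sigma> \<circ> \<tau>"])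
       (use tt inS in \<open>auto simp: comp_assoc \<tau>_def\<close>)
  also have "\<dots> = sum (\<lambda>\<sigma>. - f \<sigma>) S"
    by (rule sum.cong) (auto simp: f_def Piff sg)
  also have "\<dots> = - sum f S" by (simp add: sum_negf)
  finally have "sum f S = 0" by linarith
  then show ?thesis unfolding f_def S_def .
qed


lemma bp_less:
  assumes "\<sigma> permutes {..<Suc d}" "i < n * Suc d"
  shows "block_perm n \<sigma> i < n * Suc d"
proof -
  have n: "n > 0" using assms(2) by (cases n) auto
  have "i div n < Suc d" using assms(2) n by (simp add: div_less_iff_less_mult mult.commute)
  then have "\<sigma> (i div n) < Suc d" using permutes_in_image[OF assms(1)] by simp
  then have "\<sigma> (i div n) \<le> d" by simp
  then have "\<sigma> (i div n) * n \<le> d * n" by simp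
  moreover have "i mod n < n" using n by simp
  ultimately have "\<sigma> (i div n) * n + i mod n < d * n + n" by linarith
  moreover have "n * Suc d = d * n + n" by simp
  ultimately show ?thesis unfolding block_perm_def by linarith
qed

lemma blk_less:
  assumes "b < Suc d" "r < (n::nat)"
  shows "b * n + r < n * Suc d"
proof -
  have "b * n \<le> d * n" using assms(1) by simp
  moreover have "n * Suc d = d * n + n" by simp
  ultimately show ?thesis using assms(2) by linarith
qed

lemma semisimple_vanish:
  fixes \<gamma> :: "nat \<Rightarrow> 'k::field" and a :: "nat \<Rightarrow> 'k"
  assumes gnz: "\<forall>j<R. \<gamma> j \<noteq> 0" and a: "\<And>g. a g = (\<Sum>j<R. \<gamma> j powi (int g - 1))"
  shows "antisym_vanishes a n (R ^ n)"
  unfolding antisym_vanishes_def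
proof (intro allI impI)
  fix c cmp gen
  define d where "d = R ^ n"
  define K where "K = n * Suc d"
  assume wf0: "endo_wf (n * Suc (R ^ n)) c cmp"
  then have wf: "\<forall>b i. i < K \<longrightarrow> cmp (b, i) < c" unfolding endo_wf_def K_def d_def by simp
  define S where "S = {\<sigma>. \<sigma> permutes {..<Suc d}}"
  define P where "P = {0..<c} \<rightarrow>\<^sub>E {..<R}"
  define W where "W \<kappa> = (\<Prod>v\<in>{0..<c}. \<gamma> (\<kappa> v) powi (int (gen v) - 1)) * (\<Prod>i<K. \<gamma> (\<kappa> (cmp (True, i))))" for \<kappa>
  define compat where "compat \<sigma> \<kappa> = (\<forall>i<K. \<kappa> (cmp (True, i)) = \<kappa> (cmp (False, block_perm n \<sigma> i)))" for \<sigma> and \<kappa> :: "nat \<Rightarrow> nat"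
  have finS: "finite S" unfolding S_def by (rule finite_permutations) simp
  have finP: "finite P" unfolding P_def by (simp add: finite_PiE)
  have ev: "eval_closure a n K \<sigma> c cmp gen = (\<Sum>\<kappa>\<in>{\<kappa>\<in>P. compat \<sigma> \<kappa>}. W \<kappa>)" if sS: "\<sigma> \<in> S" for \<sigma>
  proof -
    have st: "\<forall>i<K. cmp (True, i) < c \<and> cmp (False, block_perm n \<sigma> i) < c"
      using wf bp_less[of \<sigma> d _ n] sS unfolding S_def K_def by auto
    show ?thesis
      unfolding eval_closure_def closed_comps_def comp_genus_def a P_def W_def compat_def
      by (rule state_sum[OF glue_edges_def st gnz])
  qed
  have inner: "(\<Sum>\<sigma>\<in>S. if compat \<sigma> \<kappa> then sign \<sigma> else 0) = (0::int)" if kP: "\<kappa> \<in> P" for \<kappa>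
  proof -
    define U where "U b = (\<lambda>r\<in>{..<n}. \<kappa> (cmp (True, b * n + r)))" for b
    have Uin: "U ` {..<Suc d} \<subseteq> {..<n} \<rightarrow>\<^sub>E {..<R}"
    proof
      fix x assume "x \<in> U ` {..<Suc d}"
      then obtain b where b: "b < Suc d" "x = U b" by auto
      have "\<kappa> (cmp (True, b * n + r)) < R" if r: "r < n" for r
      proof -
        have "b * n + r < K" unfolding K_def using b(1) r
          by (rule blk_less)
        then have "cmp (True, b * n + r) < c" using wf by blast
        then show ?thesis using kP unfolding P_def by auto
      qed
      then show "x \<in> {..<n} \<rightarrow>\<^sub>E {..<R}" unfolding b(2) U_def by auto
    qed
    have "\<not> inj_on U {..<Suc d}"
    proof
      assume "inj_on U {..<Suc d}"
      then have "card {..<Suc d} \<le> card ({..<n} \<rightarrow>\<^sub>E {..<R})"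
        using Uin by (intro card_inj_on_le) (auto simp: finite_PiE)
      then show False by (simp add: card_PiE d_def)
    qed
    then obtain b b' where bb: "b < Suc d" "b' < Suc d" "b \<noteq> b'" "U b = U b'"
      unfolding inj_on_def by auto
    show ?thesis unfolding S_def
    proof (rule sign_sum_zero[OF bb(1-3)])
      fix \<sigma> assume sp: "\<sigma> permutes {..<Suc d}" and cs: "compat \<sigma> \<kappa>"
      define \<tau> where "\<tau> = Transposition.transpose b b'"
      have Ut: "U (\<tau> x) = U x" for x
        unfolding \<tau>_def using bb(4) by (cases "x = b"; cases "x = b'") auto
      show "compat (\<sigma> \<circ> Transposition.transpose b b') \<kappa>"
        unfolding compat_def \<tau>_def[symmetric]
      proof (intro allI impI)
        fix i assume iK: "i < K"
        then have n: "n > 0" unfolding K_def by (cases n) auto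
        define b0 where "b0 = i div n"
        define r where "r = i mod n"
        have i_eq: "i = b0 * n + r" unfolding b0_def r_def by simp
        have rn: "r < n" unfolding r_def using n by simp
        have b0: "b0 < Suc d" unfolding b0_def using iK n unfolding K_def
          by (simp add: div_less_iff_less_mult mult.commute)
        have tb0: "\<tau> b0 < Suc d"
          unfolding \<tau>_def using b0 bb(1,2) by (cases "b0 = b"; cases "b0 = b'") auto
        define i' where "i' = \<tau> b0 * n + r"
        have i'K: "i' < K" unfolding i'_def K_def using tb0 rn
          by (rule blk_less)
        have bp1: "block_perm n (\<sigma> \<circ> \<tau>) i = block_perm n \<sigma> i'"
          unfolding block_perm_def i'_def using rn n by (simp add: b0_def r_def)
        have "\<kappa> (cmp (True, i)) = U b0 r" unfolding U_def i_eq using rn by simp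
        also have "\<dots> = U (\<tau> b0) r" using Ut by simp
        also have "\<dots> = \<kappa> (cmp (True, i'))" unfolding U_def i'_def using rn by simp
        also have "\<dots> = \<kappa> (cmp (False, block_perm n \<sigma> i'))" using cs i'K unfolding compat_def by blast
        finally show "\<kappa> (cmp (True, i)) = \<kappa> (cmp (False, block_perm n (\<sigma> \<circ> \<tau>) i))" using bp1 by simp
      qed
    qed
  qed
  have "(\<Sum>\<sigma>\<in>S. of_int (sign \<sigma>) * eval_closure a n K \<sigma> c cmp gen)
      = (\<Sum>\<sigma>\<in>S. \<Sum>\<kappa>\<in>P. of_int (sign \<sigma>) * (if compat \<sigma> \<kappa> then W \<kappa> else 0))"
    using ev finP by (simp add: sum.inter_filter sum_distrib_left)
  also have "\<dots> = (\<Sum>\<kappa>\<in>P. \<Sum>\<sigma>\<in>S. of_int (sign \<sigma>) * (if compat \<sigma> \<kappa> then W \<kappa> else 0))"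
    by (rule sum.swap)
  also have "\<dots> = (\<Sum>\<kappa>\<in>P. W \<kappa> * of_int (\<Sum>\<sigma>\<in>S. if compat \<sigma> \<kappa> then sign \<sigma> else 0))"
    by (rule sum.cong) (auto simp: of_int_sum sum_distrib_left intro!: sum.cong)
  also have "\<dots> = 0" using inner by simp
  finally show "(\<Sum>\<sigma>\<in>{\<sigma>. \<sigma> permutes {..<Suc (R ^ n)}}. of_int (sign \<sigma>) * eval_closure a n (n * Suc (R ^ n)) \<sigma> c cmp gen) = 0"
    unfolding S_def K_def d_def .
qed


lemma inv_geo:
  fixes l :: "'k::field"
  shows "inverse (1 - fps_const l * fps_X) = Abs_fps (\<lambda>g. l ^ g)"
proof (rule fps_inverse_unique)
  show "(1 - fps_const l * fps_X) * Abs_fps (\<lambda>g. l ^ g) = 1"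
  proof (rule fps_ext)
    fix n show "((1 - fps_const l * fps_X) * Abs_fps (\<lambda>g. l ^ g)) $ n = 1 $ n"
      by (cases n) (simp_all add: algebra_simps)
  qed
qed

fun Pw :: "'k::comm_ring_1 poly \<Rightarrow> 'k poly \<Rightarrow> nat \<Rightarrow> 'k poly" where
  "Pw E1 E2 0 = 2"
| "Pw E1 E2 (Suc 0) = E1"
| "Pw E1 E2 (Suc (Suc h)) = E1 * Pw E1 E2 (Suc h) - E2 * Pw E1 E2 h"

lemma Pw_poly:
  assumes "poly E1 x = r1 + r2" "poly E2 x = r1 * r2"
  shows "poly (Pw E1 E2 h) x = r1 ^ h + r2 ^ h"
  using assms by (induction E1 E2 h rule: Pw.induct) (simp_all add: algebra_simps)

lemma Pw_zero:
  assumes "poly E1 0 = 0" "poly E2 0 = 0" "h > 0"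
  shows "poly (Pw E1 E2 h) 0 = 0"
  using assms by (induction E1 E2 h rule: Pw.induct) auto

lemma sum_list_blocks:
  "sum_list (map f (concat (map (\<lambda>i. replicate (k i) (x i)) [0..<s])))
     = (\<Sum>i<s. of_nat (k i) * f (x i))"
  by (induction s) (simp_all add: sum_list_replicate lessThan_Suc add.commute)

lemma length_blocks:
  "length (concat (map (\<lambda>i. replicate (k i) (x i)) [0..<s])) = (\<Sum>i<s. k i)"
  by (induction s) (simp_all add: lessThan_Suc)

lemma set_blocks:
  "set (concat (map (\<lambda>i. replicate (k i) (x i)) [0..<s])) \<subseteq> x ` {..<s}"
  by auto

lemma limit_vanish:
  fixes A :: "nat \<Rightarrow> 'k::field_char_0 poly"
  assumes "\<And>e. e \<noteq> 0 \<Longrightarrow> antisym_vanishes (\<lambda>g. poly (A g) e) n d"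
  shows "antisym_vanishes (\<lambda>g. poly (A g) 0) n d"
  unfolding antisym_vanishes_def
proof (intro allI impI)
  fix c cmp gen assume wf: "endo_wf (n * Suc d) c cmp"
  define S where "S = {\<sigma>. \<sigma> permutes {..<Suc d}}"
  define Q where "Q = (\<Sum>\<sigma>\<in>S. of_int (sign \<sigma>) *
        (\<Prod>C\<in>closed_comps n (n * Suc d) \<sigma> c cmp. A (comp_genus (n * Suc d) cmp gen C)))"
  have pQ: "poly Q x = (\<Sum>\<sigma>\<in>S. of_int (sign \<sigma>) * eval_closure (\<lambda>g. poly (A g) x) n (n * Suc d) \<sigma> c cmp gen)" for x
    unfolding Q_def eval_closure_def by (simp add: poly_sum poly_prod)
  have "poly (Q * [:0, 1:]) x = 0" for x
  proof (cases "x = 0")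
    case False
    then have "poly Q x = 0" using assms[OF False] wf unfolding pQ antisym_vanishes_def S_def by blast
    then show ?thesis by simp
  qed simp
  then have "Q * [:0, 1:] = 0" using poly_all_0_iff_0 by blast
  then have "Q = 0" by simp
  then have "poly Q 0 = 0" by simp
  then show "(\<Sum>\<sigma>\<in>{\<sigma>. \<sigma> permutes {..<Suc d}}. of_int (sign \<sigma>) * eval_closure (\<lambda>g. poly (A g) 0) n (n * Suc d) \<sigma> c cmp gen) = 0"
    unfolding pQ S_def .
qed

lemma semisimple_vanish_list:
  fixes xs :: "'k::field list" and a :: "nat \<Rightarrow> 'k"
  assumes nz: "\<forall>x\<in>set xs. x \<noteq> 0" and a: "\<And>g. a g = sum_list (map (\<lambda>x. x powi (int g - 1)) xs)"
  shows "antisym_vanishes a n (length xs ^ n)"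
proof (rule semisimple_vanish[where \<gamma> = "\<lambda>j. xs ! j"])
  show "\<forall>j<length xs. xs ! j \<noteq> 0" using nz by auto
  fix g show "a g = (\<Sum>j<length xs. xs ! j powi (int g - 1))"
    unfolding a by (simp add: sum_list_sum_nth atLeast0LessThan)
qed

lemma quad_roots:
  fixes e1 e2 :: "'k::alg_closed_field"
  shows "\<exists>r1 r2. r1 + r2 = e1 \<and> r1 * r2 = e2"
proof -
  have "degree [:e2, -e1, 1:] > 0" by simp
  then obtain r where r: "poly [:e2, -e1, 1:] r = 0" using alg_closed_imp_poly_has_root by blast
  then have "r * (e1 - r) = e2" by (simp add: algebra_simps power2_eq_square)
  then show ?thesis by (intro exI[of _ r] exI[of _ "e1 - r"]) simp
qed

theorem mainTheorem12:
  fixes mu :: "'k::{alg_closed_field, field_char_0}"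
    and m :: int and s :: nat and ms :: "nat \<Rightarrow> nat" and lam :: "nat \<Rightarrow> 'k"
  assumes "m \<ge> 2"
    and "\<forall>i<s. ms i \<ge> 1"
    and "\<forall>i<s. lam i \<noteq> 0"
  shows "\<exists>a :: nat \<Rightarrow> 'k. pseudocharacter a \<and>
           Z_alpha a = fps_const mu + fps_const (of_int m) * fps_X
             + (\<Sum>i<s. fps_const (of_nat (ms i) / lam i)
                        * inverse (1 - fps_const (lam i) * fps_X))"
proof -
  note lnz = assms(3)
  define F where "F = fps_const mu + fps_const (of_int m) * fps_X
             + (\<Sum>i<s. fps_const (of_nat (ms i) / lam i)
                        * inverse (1 - fps_const (lam i) * fps_X))"
  define M where "M = nat m"
  have mM: "m = int M" "M \<ge> 2" using assms(1) unfolding M_def by auto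
  have Fn: "F $ g = (if g = 0 then mu else 0) + (if g = 1 then of_nat M else 0)
                   + (\<Sum>i<s. of_nat (ms i) / lam i * lam i ^ g)" for g
    unfolding F_def by (simp add: fps_sum_nth inv_geo mM(1))
  define E1 :: "'k poly" where "E1 = [:0, - of_nat (M - 2), mu:]"
  define E2 :: "'k poly" where "E2 = [:0, 0, 1:]"
  define A where "A g = (if g = 0 then [:mu + (\<Sum>i<s. of_nat (ms i) / lam i):]
      else [:\<Sum>i<s. of_nat (ms i) * lam i ^ (g - 1):] + smult (of_nat (M - 2)) (monom 1 (g - 1))
           + Pw E1 E2 (g - 1))" for g
  define L where "L = concat (map (\<lambda>i. replicate (ms i) (lam i)) [0..<s])"
  define R where "R = length L + M"
  have A0: "poly (A g) 0 = F $ g" for g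
  proof (cases g)
    case 0 then show ?thesis unfolding A_def Fn by simp
  next
    case (Suc h)
    show ?thesis
    proof (cases h)
      case 0
      have "of_nat (M - 2) + 2 = (of_nat M :: 'k)" using mM(2)
        by (metis add_diff_inverse_nat linorder_not_less of_nat_add of_nat_numeral add.commute)
      moreover have "(\<Sum>i<s. of_nat (ms i) / lam i * lam i) = (\<Sum>i<s. of_nat (ms i) :: 'k)"
        using lnz by (intro sum.cong) auto
      ultimately show ?thesis unfolding A_def Fn using Suc 0 by (simp add: poly_monom algebra_simps)
    next
      case (Suc h')
      have "poly (Pw E1 E2 h) 0 = 0" by (rule Pw_zero) (simp_all add: E1_def E2_def Suc)
      moreover have "(\<Sum>i<s. of_nat (ms i) / lam i * lam i ^ g) = (\<Sum>i<s. of_nat (ms i) * lam i ^ h)"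
        using lnz \<open>g = Suc h\<close> by (intro sum.cong) auto
      ultimately show ?thesis unfolding A_def Fn using \<open>g = Suc h\<close> Suc by (simp add: poly_monom)
    qed
  qed
  have real: "antisym_vanishes (\<lambda>g. poly (A g) e) n (R ^ n)" if e: "e \<noteq> 0" for e n
  proof -
    obtain r1 r2 where r: "r1 + r2 = poly E1 e" "r1 * r2 = poly E2 e" using quad_roots by blast
    have e2: "poly E2 e = e * e" unfolding E2_def by simp
    have r12: "r1 \<noteq> 0" "r2 \<noteq> 0" using r(2) e e2 by auto
    define xs where "xs = L @ replicate (M - 2) e @ [r1, r2]"
    have lx: "length xs = R" unfolding xs_def R_def using mM(2) by simp
    have nz: "\<forall>x\<in>set xs. x \<noteq> 0" unfolding xs_def L_def using lnz r12 e by auto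
    have val: "poly (A g) e = sum_list (map (\<lambda>x. x powi (int g - 1)) xs)" for g
    proof (cases g)
      case 0
      have "inverse r1 + inverse r2 = (r1 + r2) / (r1 * r2)" using r12 by (simp add: field_simps)
      also have "\<dots> = mu - of_nat (M - 2) / e" unfolding r e2 E1_def using e
        by (simp add: field_simps power2_eq_square)
      finally have ir: "inverse r1 + inverse r2 = mu - of_nat (M - 2) / e" .
      show ?thesis unfolding A_def xs_def L_def using 0 ir
        by (simp add: sum_list_blocks sum_list_replicate power_int_minus divide_inverse algebra_simps)
    next
      case (Suc h)
      have pi: "x powi (int g - 1) = x ^ h" for x :: 'k using Suc by simp
      show ?thesis unfolding A_def xs_def L_def pi using Suc
        by (simp add: sum_list_blocks sum_list_replicate poly_monom Pw_poly[OF r(1)[symmetric] r(2)[symmetric]])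
    qed
    show ?thesis unfolding lx[symmetric] by (rule semisimple_vanish_list[OF nz val])
  qed
  have "antisym_vanishes (\<lambda>g. F $ g) n (R ^ n)" for n
    using limit_vanish[of A n "R ^ n", OF real] A0 by simp
  then have "pseudocharacter (\<lambda>g. F $ g)"
    unfolding pseudocharacter_def deg_alpha_def by auto
  moreover have "Z_alpha (\<lambda>g. F $ g) = F" unfolding Z_alpha_def by (simp add: fps_nth_inverse)
  ultimately show ?thesis unfolding F_def by blast
qed

end
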